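(* Let $A$ be a commutative ring, $B=A[z_1,\ldots,z_n]$, and $a_1,\ldots,a_n\in A$ a regular sequence in $A$. Let $\mathcal D:B^n\to B$ be the $A$-linear map $\mathcal D(h_1,\ldots,h_n)=\sum_{i=1}^n(\partial_{z_i}h_i-a_ih_i)$, and let $\mathfrak a=Aa_1+\cdots+Aa_n$. Let $g\in B$ have total degree $d$ and let $g_d$ be its homogeneous component of degree $d$. If $g\in\mathrm{Im}\,\mathcal D$, then every coefficient of $g_d$ lies in $\mathfrak a$.
   Context: $\partial_{z_i}$ denotes the formal partial derivative with respect to $z_i$ on $B$. *)

theory Defs
  imports Main
begin

text \<open>Polynomials in B = A[z_0,...,z_{n-1}] are represented by their coefficient
  functions: a map from exponent vectors (nat \<Rightarrow> nat) to coefficients in A,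
  with finite support, and supported on exponent vectors involving only the
  variables z_0, ..., z_{n-1}.\<close>

definition is_poly :: "nat \<Rightarrow> ((nat \<Rightarrow> nat) \<Rightarrow> 'a::comm_ring_1) \<Rightarrow> bool" where
  "is_poly n h \<longleftrightarrow> finite {\<alpha>. h \<alpha> \<noteq> 0} \<and> (\<forall>\<alpha>. h \<alpha> \<noteq> 0 \<longrightarrow> (\<forall>i\<ge>n. \<alpha> i = 0))"

definition mdeg :: "nat \<Rightarrow> (nat \<Rightarrow> nat) \<Rightarrow> nat" where
  "mdeg n \<alpha> = (\<Sum>i<n. \<alpha> i)"

definition pdz :: "nat \<Rightarrow> ((nat \<Rightarrow> nat) \<Rightarrow> 'a::comm_ring_1) \<Rightarrow> ((nat \<Rightarrow> nat) \<Rightarrow> 'a)" where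
  "pdz i h = (\<lambda>\<alpha>. of_nat (\<alpha> i + 1) * h (\<alpha>(i := \<alpha> i + 1)))"

definition in_ideal_gen :: "(nat \<Rightarrow> 'a::comm_ring_1) \<Rightarrow> nat \<Rightarrow> 'a \<Rightarrow> bool" where
  "in_ideal_gen a k x \<longleftrightarrow> (\<exists>c. x = (\<Sum>j<k. c j * a j))"

definition regular_seq :: "(nat \<Rightarrow> 'a::comm_ring_1) \<Rightarrow> nat \<Rightarrow> bool" where
  "regular_seq a n \<longleftrightarrow>
     (\<forall>i<n. \<forall>x. in_ideal_gen a i (x * a i) \<longrightarrow> in_ideal_gen a i x) \<and> \<not> in_ideal_gen a n 1"

definition Dmap :: "nat \<Rightarrow> (nat \<Rightarrow> 'a::comm_ring_1) \<Rightarrow> (nat \<Rightarrow> (nat \<Rightarrow> nat) \<Rightarrow> 'a) \<Rightarrow> ((nat \<Rightarrow> nat) \<Rightarrow> 'a)" where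
  "Dmap n a h = (\<lambda>\<alpha>. \<Sum>i<n. pdz i (h i) \<alpha> - a i * h i \<alpha>)"

end

theory Submission
  imports Defs
begin


definition nab :: "nat \<Rightarrow> (nat \<Rightarrow> 'a::comm_ring_1) \<Rightarrow> ((nat \<Rightarrow> nat) \<Rightarrow> 'a) \<Rightarrow> ((nat \<Rightarrow> nat) \<Rightarrow> 'a)" where
  "nab j a f = (\<lambda>\<alpha>. pdz j f \<alpha> - a j * f \<alpha>)"

lemma Dmap_nab: "Dmap n a h = (\<lambda>\<alpha>. \<Sum>i<n. nab i a (h i) \<alpha>)"
  by (simp add: Dmap_def nab_def)

lemma mdeg_upd: "i < n \<Longrightarrow> mdeg n (\<alpha>(i := \<alpha> i + 1)) = mdeg n \<alpha> + 1"
proof -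
  assume i: "i < n"
  have "(\<Sum>j<n. (\<alpha>(i := \<alpha> i + 1)) j) = (\<Sum>j<n. \<alpha> j + (if j = i then 1 else 0))"
    by (rule sum.cong) auto
  also have "\<dots> = (\<Sum>j<n. \<alpha> j) + 1" using i by (simp add: sum.distrib)
  finally show ?thesis by (simp add: mdeg_def)
qed


lemma nab_comm: "i \<noteq> j \<Longrightarrow> nab i a (nab j a f) = nab j a (nab i a f)"
proof (rule ext)
  fix \<alpha> :: "nat \<Rightarrow> nat" assume ij: "i \<noteq> j"
  have u: "\<alpha>(i := \<alpha> i + 1, j := \<alpha> j + 1) = \<alpha>(j := \<alpha> j + 1, i := \<alpha> i + 1)"
    using ij by (simp add: fun_upd_twist)
  show "nab i a (nab j a f) \<alpha> = nab j a (nab i a f) \<alpha>"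
    unfolding nab_def pdz_def using ij u
    by (simp add: algebra_simps)
qed
lemma nab_add: "nab i a (\<lambda>\<alpha>. f \<alpha> + g \<alpha>) = (\<lambda>\<alpha>. nab i a f \<alpha> + nab i a g \<alpha>)"
  by (rule ext) (simp add: nab_def pdz_def algebra_simps)

lemma nab_neg: "nab i a (\<lambda>\<alpha>. - f \<alpha>) = (\<lambda>\<alpha>. - nab i a f \<alpha>)"
  by (rule ext) (simp add: nab_def pdz_def algebra_simps)

lemma nab_zero: "nab i a (\<lambda>\<alpha>. 0) = (\<lambda>\<alpha>. 0)"
  by (rule ext) (simp add: nab_def pdz_def)

lemma nab_sum: "nab i a (\<lambda>\<alpha>. \<Sum>k\<in>K. F k \<alpha>) = (\<lambda>\<alpha>. \<Sum>k\<in>K. nab i a (F k) \<alpha>)"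
  by (rule ext) (simp add: nab_def pdz_def sum_distrib_left sum_subtractf)


lemma skew_sum:
  fixes Y :: "nat \<Rightarrow> nat \<Rightarrow> 'a::comm_ring_1"
  shows "(\<forall>i<n. \<forall>j<n. i \<noteq> j \<longrightarrow> Y i j = - Y j i) \<Longrightarrow> (\<forall>i<n. Y i i = 0) \<Longrightarrow> (\<Sum>i<n. \<Sum>j<n. Y i j) = 0"
proof (induction n)
  case 0
  then show ?case by simp
next
  case (Suc n)
  have "(\<Sum>i<Suc n. \<Sum>j<Suc n. Y i j) = (\<Sum>i<n. (\<Sum>j<n. Y i j) + Y i n) + ((\<Sum>j<n. Y n j) + Y n n)"
    by (simp only: sum.lessThan_Suc)
  also have "\<dots> = (\<Sum>i<n. \<Sum>j<n. Y i j) + ((\<Sum>i<n. Y i n + Y n i) + Y n n)"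
    by (simp only: sum.distrib add.assoc)
  also have "(\<Sum>i<n. Y i n + Y n i) = 0" 
  proof (rule sum.neutral, rule ballI)
    fix i assume "i \<in> {..<n}"
    then have "i < Suc n" "n < Suc n" "i \<noteq> n" by auto
    then have "Y i n = - Y n i" using Suc.prems(1) by blast
    then show "Y i n + Y n i = 0" by simp
  qed
  moreover have "(\<Sum>i<n. \<Sum>j<n. Y i j) = 0"
  proof (rule Suc.IH)
    show "\<forall>i<n. \<forall>j<n. i \<noteq> j \<longrightarrow> Y i j = - Y j i" using Suc.prems(1) less_SucI by blast
    show "\<forall>i<n. Y i i = 0" using Suc.prems(2) less_SucI by blast
  qed
  moreover have "Y n n = 0" using Suc.prems(2) by blast
  ultimately show ?case by simp
qed

lemma koszul:
  fixes a :: "nat \<Rightarrow> 'a::comm_ring_1"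
  shows "(\<forall>i<n. \<forall>x. in_ideal_gen a i (x * a i) \<longrightarrow> in_ideal_gen a i x) \<Longrightarrow> (\<Sum>i<n. x i * a i) = 0 \<Longrightarrow>
    \<exists>c. (\<forall>i<n. \<forall>j<n. c i j = - c j i) \<and> (\<forall>i<n. c i i = 0) \<and> (\<forall>i<n. x i = (\<Sum>j<n. c i j * a j))"
proof (induction n arbitrary: x)
  case 0
  then show ?case by simp
next
  case (Suc n)
  have s: "(\<Sum>i<n. x i * a i) + x n * a n = 0" using Suc.prems(2) by simp
  have "in_ideal_gen a n (x n * a n)"
    unfolding in_ideal_gen_def by (rule exI[of _ "\<lambda>i. - x i"]) (use s in \<open>simp add: sum_negf eq_neg_iff_add_eq_0 add.commute\<close>)
  then have "in_ideal_gen a n (x n)" using Suc.prems(1) lessI by blast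
  then obtain y where y: "x n = (\<Sum>j<n. y j * a j)" unfolding in_ideal_gen_def by blast
  define x' where "x' = (\<lambda>i. x i + y i * a n)"
  have "(\<Sum>i<n. x' i * a i) = (\<Sum>i<n. x i * a i) + a n * (\<Sum>i<n. y i * a i)"
    by (simp add: x'_def sum.distrib sum_distrib_left algebra_simps)
  also have "\<dots> = 0" using s y by (simp add: mult.commute)
  finally have "(\<Sum>i<n. x' i * a i) = 0" .
  moreover have prem: "\<forall>i<n. \<forall>x. in_ideal_gen a i (x * a i) \<longrightarrow> in_ideal_gen a i x"
    using Suc.prems(1) less_SucI by blast
  ultimately obtain c' where c':
    "\<forall>i<n. \<forall>j<n. c' i j = - c' j i" "\<forall>i<n. c' i i = 0" "\<forall>i<n. x' i = (\<Sum>j<n. c' i j * a j)"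
    using Suc.IH[of x'] by blast
  define c where "c = (\<lambda>i j. if i < n \<and> j < n then c' i j else if i = n \<and> j < n then y j
        else if j = n \<and> i < n then - y i else 0)"
  have "\<forall>i<Suc n. \<forall>j<Suc n. c i j = - c j i"
  proof (intro allI impI)
    fix i j assume "i < Suc n" "j < Suc n"
    show "c i j = - c j i"
    proof (cases "i < n \<and> j < n")
      case True
      then have "c i j = c' i j" "c j i = c' j i" by (simp_all add: c_def)
      then show ?thesis using c'(1) True by metis
    next
      case False
      then show ?thesis using \<open>i < Suc n\<close> \<open>j < Suc n\<close> by (auto simp: c_def less_Suc_eq)
    qed
  qed
  moreover have "\<forall>i<Suc n. c i i = 0" using c'(2) by (auto simp: c_def less_Suc_eq)
  moreover have "\<forall>i<Suc n. x i = (\<Sum>j<Suc n. c i j * a j)"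
  proof (intro allI impI)
    fix i assume "i < Suc n"
    then consider "i < n" | "i = n" by linarith
    then show "x i = (\<Sum>j<Suc n. c i j * a j)"
    proof cases
      case 1
      have "(\<Sum>j<Suc n. c i j * a j) = (\<Sum>j<n. c' i j * a j) - y i * a n"
        using 1 by (simp add: c_def)
      also have "\<dots> = x' i - y i * a n" using c'(3) 1 by metis
      also have "\<dots> = x i" by (simp add: x'_def)
      finally show ?thesis by simp
    next
      case 2
      have "(\<Sum>j<Suc n. c i j * a j) = (\<Sum>j<n. y j * a j)"
        using 2 by (simp add: c_def)
      then show ?thesis using y 2 by simp
    qed
  qed
  ultimately show ?case by blast
qed



lemma Dmap_expand: "Dmap n a h \<alpha> = (\<Sum>i<n. of_nat (\<alpha> i + 1) * h i (\<alpha>(i := \<alpha> i + 1)) - a i * h i \<alpha>)"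
  by (simp add: Dmap_def pdz_def)

lemma high_zero:
  assumes "\<forall>i<n. \<forall>\<alpha>. h i \<alpha> \<noteq> 0 \<longrightarrow> mdeg n \<alpha> \<le> m" "m \<le> d" "mdeg n \<alpha> = d" "i < n"
  shows "h i (\<alpha>(i := \<alpha> i + 1)) = 0"
proof -
  have "mdeg n (\<alpha>(i := \<alpha> i + 1)) = d + 1" using mdeg_upd assms(3,4) by simp
  then show ?thesis using assms(1,2,4) by fastforce
qed

lemma direct:
  assumes "\<forall>i<n. \<forall>\<alpha>. h i \<alpha> \<noteq> 0 \<longrightarrow> mdeg n \<alpha> \<le> m" "m \<le> d" "mdeg n \<alpha> = d"
  shows "Dmap n a h \<alpha> = (\<Sum>i<n. (- h i \<alpha>) * a i)"
  unfolding Dmap_expand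
proof (rule sum.cong[OF refl])
  fix i assume "i \<in> {..<n}"
  then have "h i (\<alpha>(i := \<alpha> i + 1)) = 0" using high_zero[OF assms] by simp
  then show "of_nat (\<alpha> i + 1) * h i (\<alpha>(i := \<alpha> i + 1)) - a i * h i \<alpha> = - h i \<alpha> * a i"
    by (simp add: mult.commute)
qed

lemma descent:
  fixes a :: "nat \<Rightarrow> 'a::comm_ring_1" and g :: "(nat \<Rightarrow> nat) \<Rightarrow> 'a"
  assumes regp: "\<forall>i<n. \<forall>x. in_ideal_gen a i (x * a i) \<longrightarrow> in_ideal_gen a i x"
    and deg_le: "\<forall>\<alpha>. g \<alpha> \<noteq> 0 \<longrightarrow> mdeg n \<alpha> \<le> d"
  shows "(\<forall>i<n. \<forall>\<alpha>. h i \<alpha> \<noteq> 0 \<longrightarrow> mdeg n \<alpha> \<le> m) \<Longrightarrow> g = Dmap n a h \<Longrightarrow> mdeg n \<alpha> = d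
     \<Longrightarrow> in_ideal_gen a n (g \<alpha>)"
proof (induction m arbitrary: h)
  case 0
  then have "g \<alpha> = (\<Sum>i<n. (- h i \<alpha>) * a i)" using direct[of n h 0 d \<alpha> a] by simp
  then show ?case unfolding in_ideal_gen_def by (rule exI[of _ "\<lambda>i. - h i \<alpha>"])
next
  case (Suc m)
  show ?case
  proof (cases "Suc m \<le> d")
    case True
    then have "g \<alpha> = (\<Sum>i<n. (- h i \<alpha>) * a i)" using direct[of n h "Suc m" d \<alpha> a] Suc.prems by simp
    then show ?thesis unfolding in_ideal_gen_def by (rule exI[of _ "\<lambda>i. - h i \<alpha>"])
  next
    case False
    have bnd: "\<forall>i<n. \<forall>\<alpha>. h i \<alpha> \<noteq> 0 \<longrightarrow> mdeg n \<alpha> \<le> Suc m" using Suc.prems(1) .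
    have top: "(\<Sum>i<n. h i \<beta> * a i) = 0" if "mdeg n \<beta> = Suc m" for \<beta>
    proof -
      have "g \<beta> = 0" using deg_le that False by fastforce
      moreover have "g \<beta> = (\<Sum>i<n. (- h i \<beta>) * a i)"
        using direct[OF bnd order_refl that] Suc.prems(2) by simp
      ultimately have "(\<Sum>i<n. (- h i \<beta>) * a i) = 0" by simp
      then show ?thesis by (simp add: sum_negf)
    qed
    have ex: "\<forall>\<beta>. \<exists>cc. mdeg n \<beta> = Suc m \<longrightarrow> ((\<forall>i<n. \<forall>j<n. cc i j = - cc j i) \<and> (\<forall>i<n. cc i i = 0)
        \<and> (\<forall>i<n. h i \<beta> = (\<Sum>j<n. cc i j * a j)))"
    proof
      fix \<beta>
      show "\<exists>cc. mdeg n \<beta> = Suc m \<longrightarrow> ((\<forall>i<n. \<forall>j<n. cc i j = - cc j i) \<and> (\<forall>i<n. cc i i = 0)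
        \<and> (\<forall>i<n. h i \<beta> = (\<Sum>j<n. cc i j * a j)))"
      proof (cases "mdeg n \<beta> = Suc m")
        case True
        then show ?thesis using koszul[OF regp top[OF True]] by blast
      qed blast
    qed
    obtain c where c: "\<And>\<beta>. mdeg n \<beta> = Suc m \<Longrightarrow> ((\<forall>i<n. \<forall>j<n. c \<beta> i j = - c \<beta> j i) \<and> (\<forall>i<n. c \<beta> i i = 0)
        \<and> (\<forall>i<n. h i \<beta> = (\<Sum>j<n. c \<beta> i j * a j)))"
      using choice[OF ex] by blast
    define C where "C i j = (\<lambda>\<beta>. if mdeg n \<beta> = Suc m then c \<beta> i j else 0)" for i j
    define k where "k i = (\<lambda>\<beta>. \<Sum>j<n. nab j a (C i j) \<beta>)" for i
    define h' where "h' i = (\<lambda>\<beta>. h i \<beta> + k i \<beta>)" for i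
    have Cskew: "C j i = (\<lambda>\<beta>. - C i j \<beta>)" if "i < n" "j < n" for i j
    proof
      fix \<beta>
      show "C j i \<beta> = - C i j \<beta>"
      proof (cases "mdeg n \<beta> = Suc m")
        case True
        then have "c \<beta> j i = - c \<beta> i j" using c[OF True] that by blast
        then show ?thesis using True by (simp add: C_def)
      qed (simp add: C_def)
    qed
    have Cdiag: "C i i = (\<lambda>\<beta>. 0)" if "i < n" for i
    proof
      fix \<beta>
      show "C i i \<beta> = 0"
      proof (cases "mdeg n \<beta> = Suc m")
        case True
        then have "c \<beta> i i = 0" using c[OF True] that by blast
        then show ?thesis using True by (simp add: C_def)
      qed (simp add: C_def)
    qed
    have D: "Dmap n a h' = Dmap n a h"
    proof
      fix \<beta>
      have "Dmap n a h' \<beta> = (\<Sum>i<n. nab i a (h i) \<beta> + nab i a (k i) \<beta>)"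
        unfolding Dmap_nab h'_def nab_add by simp
      also have "\<dots> = Dmap n a h \<beta> + (\<Sum>i<n. \<Sum>j<n. nab i a (nab j a (C i j)) \<beta>)"
        unfolding Dmap_nab k_def nab_sum by (simp add: sum.distrib)
      also have "(\<Sum>i<n. \<Sum>j<n. nab i a (nab j a (C i j)) \<beta>) = 0"
      proof (rule skew_sum)
        show "\<forall>i<n. \<forall>j<n. i \<noteq> j \<longrightarrow> nab i a (nab j a (C i j)) \<beta> = - nab j a (nab i a (C j i)) \<beta>"
        proof (intro allI impI)
          fix i j assume ij: "i < n" "j < n" "i \<noteq> j"
          have "nab j a (nab i a (C j i)) = (\<lambda>\<beta>. - nab j a (nab i a (C i j)) \<beta>)"
            unfolding Cskew[OF ij(1,2)] nab_neg ..
          also have "\<dots> = (\<lambda>\<beta>. - nab i a (nab j a (C i j)) \<beta>)"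
            using nab_comm[OF ij(3)] by metis
          finally show "nab i a (nab j a (C i j)) \<beta> = - nab j a (nab i a (C j i)) \<beta>" by simp
        qed
        show "\<forall>i<n. nab i a (nab i a (C i i)) \<beta> = 0"
          using Cdiag by (simp add: nab_zero)
      qed
      finally show "Dmap n a h' \<beta> = Dmap n a h \<beta>" by simp
    qed
    have deg': "\<forall>i<n. \<forall>\<beta>. h' i \<beta> \<noteq> 0 \<longrightarrow> mdeg n \<beta> \<le> m"
    proof (intro allI impI)
      fix i \<beta> assume i: "i < n" and nz: "h' i \<beta> \<noteq> 0"
      show "mdeg n \<beta> \<le> m"
      proof (rule ccontr)
        assume "\<not> mdeg n \<beta> \<le> m"
        then have ge: "mdeg n \<beta> \<ge> Suc m" by simp
        have kk: "k i \<beta> = (\<Sum>j<n. - (C i j \<beta> * a j))"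
          unfolding k_def nab_def pdz_def
        proof (rule sum.cong[OF refl])
          fix j assume "j \<in> {..<n}"
          then have "mdeg n (\<beta>(j := \<beta> j + 1)) = mdeg n \<beta> + 1" using mdeg_upd by simp
          then have "C i j (\<beta>(j := \<beta> j + 1)) = 0" using ge by (simp add: C_def)
          then show "of_nat (\<beta> j + 1) * C i j (\<beta>(j := \<beta> j + 1)) - a j * C i j \<beta> = - (C i j \<beta> * a j)"
            by (simp add: mult.commute)
        qed
        have "h' i \<beta> = 0"
        proof (cases "mdeg n \<beta> = Suc m")
          case True
          have "k i \<beta> = - (\<Sum>j<n. c \<beta> i j * a j)"
            unfolding kk sum_negf using True by (simp add: C_def)
          also have "\<dots> = - h i \<beta>" using c[OF True] i by metis
          finally show ?thesis by (simp add: h'_def)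
        next
          case False
          then have "mdeg n \<beta> > Suc m" using ge by simp
          then have "h i \<beta> = 0" using bnd i by fastforce
          moreover have "k i \<beta> = 0" unfolding kk using False by (simp add: C_def)
          ultimately show ?thesis by (simp add: h'_def)
        qed
        with nz show False by simp
      qed
    qed
    show ?thesis
      by (rule Suc.IH[OF deg']) (use Suc.prems D in simp_all)
  qed
qed


theorem lemma2p5:
  fixes a :: "nat \<Rightarrow> 'a::comm_ring_1" and n d :: nat
    and g :: "(nat \<Rightarrow> nat) \<Rightarrow> 'a"
  assumes reg: "regular_seq a n"
    and gpoly: "is_poly n g"
    and deg_le: "\<forall>\<alpha>. g \<alpha> \<noteq> 0 \<longrightarrow> mdeg n \<alpha> \<le> d"
    and deg_eq: "\<exists>\<alpha>. g \<alpha> \<noteq> 0 \<and> mdeg n \<alpha> = d"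
    and img: "\<exists>h. (\<forall>i<n. is_poly n (h i)) \<and> g = Dmap n a h"
  shows "\<forall>\<alpha>. mdeg n \<alpha> = d \<longrightarrow> in_ideal_gen a n (g \<alpha>)"
proof (intro allI impI)
  fix \<alpha> assume \<alpha>: "mdeg n \<alpha> = d"
  obtain h where hp: "\<forall>i<n. is_poly n (h i)" and gh: "g = Dmap n a h" using img by blast
  have regp: "\<forall>i<n. \<forall>x. in_ideal_gen a i (x * a i) \<longrightarrow> in_ideal_gen a i x"
    using reg unfolding regular_seq_def by blast
  define S where "S = (\<Union>i<n. {\<beta>. h i \<beta> \<noteq> 0})"
  have fin: "finite S" unfolding S_def using hp unfolding is_poly_def by blast
  define M where "M = Max (mdeg n ` S)"
  have bnd: "\<forall>i<n. \<forall>\<beta>. h i \<beta> \<noteq> 0 \<longrightarrow> mdeg n \<beta> \<le> M"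
  proof (intro allI impI)
    fix i \<beta> assume "i < n" "h i \<beta> \<noteq> 0"
    then have "\<beta> \<in> S" unfolding S_def by blast
    then show "mdeg n \<beta> \<le> M" unfolding M_def using fin by (simp add: Max_ge)
  qed
  show "in_ideal_gen a n (g \<alpha>)" by (rule descent[OF regp deg_le bnd gh \<alpha>])
qed

end
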